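(* Let $V$ be a finite-dimensional real vector space with a Lorentzian inner product $g$, and let $V=E_1\oplus\cdots\oplus E_r$ ($r\ge1$) be a $g$-orthogonal direct sum of subspaces on each of which $g$ is non-degenerate, with $E_r$ Lorentzian. For $1\le\beta\le r$ let $g_\beta(X,Y)=g(X_\beta,Y_\beta)$, where $X_\beta,Y_\beta$ are the $E_\beta$-components. Let $p\in E_r$ be a non-zero light-like vector and $\theta=g(p,\cdot)$. Let $\bar g_1=g,\bar g_2,\dots,\bar g_{r+1}$ be linearly independent symmetric bilinear forms on $V$ with $$\bar g_\alpha=\sum_{\beta=1}^r C_{\beta\alpha}g_\beta+C_{r+1\,\alpha}\,\theta\otimes\theta,$$ and assume $C_{r\alpha}=0$ and $C_{r+1\,\alpha}\neq0$ for all $2\le\alpha\le r+1$. Let $W=\bigcap_{\alpha=2}^{r+1}\ker\bar g_\alpha$. Then $$W=\{X\in E_r\mid\theta(X)=0\},\qquad W^{\perp_g}=E_1\oplus\cdots\oplus E_{r-1}\oplus\mathbb{R}p.$$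
   Context: For a symmetric bilinear form $b$ on $V$, $\ker b=\{X\in V\mid b(X,Y)=0\ \forall Y\in V\}$; $W^{\perp_g}$ is the $g$-orthogonal complement of $W$ in $V$. *)

theory Defs
  imports "HOL-Analysis.Analysis"
begin

definition sym_bilinear :: "('v::euclidean_space \<Rightarrow> 'v \<Rightarrow> real) \<Rightarrow> bool" where
  "sym_bilinear b \<longleftrightarrow> bilinear b \<and> (\<forall>x y. b x y = b y x)"

definition form_ker :: "('v \<Rightarrow> 'v \<Rightarrow> real) \<Rightarrow> 'v set" where
  "form_ker b = {X. \<forall>Y. b X Y = 0}"

definition g_perp :: "('v \<Rightarrow> 'v \<Rightarrow> real) \<Rightarrow> 'v set \<Rightarrow> 'v set" where
  "g_perp g W = {X. \<forall>Y\<in>W. g X Y = 0}"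

definition nondeg_on :: "('v::real_vector \<Rightarrow> 'v \<Rightarrow> real) \<Rightarrow> 'v set \<Rightarrow> bool" where
  "nondeg_on g U \<longleftrightarrow> (\<forall>x\<in>U. (\<forall>y\<in>U. g x y = 0) \<longrightarrow> x = 0)"

definition neg_index_on :: "('v::euclidean_space \<Rightarrow> 'v \<Rightarrow> real) \<Rightarrow> 'v set \<Rightarrow> nat" where
  "neg_index_on g U = Max {dim S | S. subspace S \<and> S \<subseteq> U \<and> (\<forall>x\<in>S. x \<noteq> 0 \<longrightarrow> g x x < 0)}"

definition lorentzian_on :: "('v::euclidean_space \<Rightarrow> 'v \<Rightarrow> real) \<Rightarrow> 'v set \<Rightarrow> bool" where
  "lorentzian_on g U \<longleftrightarrow> nondeg_on g U \<and> neg_index_on g U = 1"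

definition is_decomp :: "(nat \<Rightarrow> 'v::real_vector set) \<Rightarrow> nat \<Rightarrow> 'v \<Rightarrow> (nat \<Rightarrow> 'v) \<Rightarrow> bool" where
  "is_decomp E r v x \<longleftrightarrow> (\<forall>\<beta>\<in>{1..r}. x \<beta> \<in> E \<beta>) \<and> (\<forall>\<beta>. \<beta> \<notin> {1..r} \<longrightarrow> x \<beta> = 0)
      \<and> v = (\<Sum>\<beta>=1..r. x \<beta>)"

definition direct_sum :: "(nat \<Rightarrow> 'v::real_vector set) \<Rightarrow> nat \<Rightarrow> bool" where
  "direct_sum E r \<longleftrightarrow> (\<forall>v. \<exists>!x. is_decomp E r v x)"

definition component :: "(nat \<Rightarrow> 'v::real_vector set) \<Rightarrow> nat \<Rightarrow> nat \<Rightarrow> 'v \<Rightarrow> 'v" where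
  "component E r \<beta> v = (THE x. is_decomp E r v x) \<beta>"

definition g_comp :: "('v::real_vector \<Rightarrow> 'v \<Rightarrow> real) \<Rightarrow> (nat \<Rightarrow> 'v set) \<Rightarrow> nat \<Rightarrow> nat \<Rightarrow> 'v \<Rightarrow> 'v \<Rightarrow> real" where
  "g_comp g E r \<beta> X Y = g (component E r \<beta> X) (component E r \<beta> Y)"

end

theory Submission imports Defs "HOL-Library.Function_Algebras" begin

lemma sum_app: "(sum F A) x = sum (\<lambda>a. F a x) A"
  by (induction A rule: infinite_finite_induct) auto

lemma indep_contra:
  fixes gbar G :: "nat \<Rightarrow> 'v \<Rightarrow> 'v \<Rightarrow> real" and th :: "'v \<Rightarrow> 'v \<Rightarrow> real"
    and C :: "nat \<Rightarrow> nat \<Rightarrow> real"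
  assumes r: "r \<ge> 1"
    and indep: "\<forall>c::nat \<Rightarrow> real. (\<forall>X Y. (\<Sum>\<alpha>=1..r+1. c \<alpha> * gbar \<alpha> X Y) = 0)
                        \<longrightarrow> (\<forall>\<alpha>\<in>{1..r+1}. c \<alpha> = 0)"
    and eq: "\<forall>\<alpha>\<in>{2..r+1}. \<forall>X Y. gbar \<alpha> X Y =
                    (\<Sum>\<beta>=1..r. C \<beta> \<alpha> * G \<beta> X Y) + C (r+1) \<alpha> * th X Y"
    and Cr: "\<forall>\<alpha>\<in>{2..r+1}. C r \<alpha> = 0"
    and z: "z \<in> {1..r-1}" and Cz: "\<forall>\<alpha>\<in>{2..r+1}. C z \<alpha> = 0"
  shows False
proof -
  define sc where "sc = (\<lambda>(c::real) (f::'v\<Rightarrow>'v\<Rightarrow>real). \<lambda>X Y. c * f X Y)"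
  interpret F: vector_space sc
    unfolding sc_def by unfold_locales (auto simp: fun_eq_iff algebra_simps)
  have inj: "inj_on gbar {2..r+1}"
  proof (rule inj_onI, rule ccontr)
    fix a b assume ab: "a \<in> {2..r+1}" "b \<in> {2..r+1}" "gbar a = gbar b" "a \<noteq> b"
    define c where "c = (\<lambda>\<alpha>::nat. if \<alpha> = a then 1 else if \<alpha> = b then -1 else (0::real))"
    have "\<forall>X Y. (\<Sum>\<alpha>=1..r+1. c \<alpha> * gbar \<alpha> X Y) = 0"
    proof (intro allI)
      fix X Y
      have "(\<Sum>\<alpha>=1..r+1. c \<alpha> * gbar \<alpha> X Y) = (\<Sum>\<alpha>=1..r+1. (if \<alpha> = a then gbar a X Y else 0) + (if \<alpha> = b then - gbar b X Y else 0))"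
        by (rule sum.cong) (auto simp: c_def ab(4))
      also have "\<dots> = gbar a X Y - gbar b X Y" using ab by (simp add: sum.distrib)
      finally show "(\<Sum>\<alpha>=1..r+1. c \<alpha> * gbar \<alpha> X Y) = 0" using ab by simp
    qed
    with indep have "\<forall>\<alpha>\<in>{1..r+1}. c \<alpha> = 0" by blast
    then have "c a = 0" using ab(1) by auto
    then show False unfolding c_def by simp
  qed
  define S where "S = gbar ` {2..r+1}"
  have cardS: "card S = r" unfolding S_def using inj by (simp add: card_image)
  have indS: "F.independent S"
  proof
    assume "F.dependent S"
    then obtain u where u: "\<exists>v\<in>S. u v \<noteq> 0" "(\<Sum>v\<in>S. sc (u v) v) = 0"
      using F.dependent_finite[of S] unfolding S_def by auto
    define c where "c = (\<lambda>\<alpha>. if \<alpha> \<in> {2..r+1} then u (gbar \<alpha>) else 0)"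
    have "\<forall>X Y. (\<Sum>\<alpha>=1..r+1. c \<alpha> * gbar \<alpha> X Y) = 0"
    proof (intro allI)
      fix X Y
      have "(\<Sum>\<alpha>=1..r+1. c \<alpha> * gbar \<alpha> X Y) = (\<Sum>\<alpha>=2..r+1. u (gbar \<alpha>) * gbar \<alpha> X Y)"
        unfolding c_def by (rule sum.mono_neutral_cong_right) auto
      also have "\<dots> = (\<Sum>v\<in>S. u v * v X Y)"
        unfolding S_def sum.reindex[OF inj] by simp
      also have "\<dots> = (\<Sum>v\<in>S. sc (u v) v) X Y"
        by (simp add: sum_app sc_def)
      finally show "(\<Sum>\<alpha>=1..r+1. c \<alpha> * gbar \<alpha> X Y) = 0" using u(2) by simp
    qed
    with indep have "\<forall>\<alpha>\<in>{1..r+1}. c \<alpha> = 0" by blast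
    moreover obtain \<alpha> where "\<alpha> \<in> {2..r+1}" "u (gbar \<alpha>) \<noteq> 0" using u(1) unfolding S_def by auto
    ultimately show False unfolding c_def by (metis atLeastAtMost_iff le_trans one_le_numeral)
  qed
  define T where "T = (\<lambda>\<beta>. G \<beta>) ` ({1..r-1} - {z}) \<union> {th}"
  have finT: "finite T" unfolding T_def by simp
  have cardT: "card T \<le> r - 1"
  proof -
    have "card T \<le> card ((\<lambda>\<beta>. G \<beta>) ` ({1..r-1} - {z})) + card {th}"
      unfolding T_def by (rule card_Un_le)
    also have "\<dots> \<le> card ({1..r-1} - {z}) + 1" using card_image_le[of "{1..r-1} - {z}" G] by simp
    also have "\<dots> = r - 1" using z by auto
    finally show ?thesis .
  qed
  have sub: "S \<subseteq> F.span T"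
  proof
    fix v assume "v \<in> S"
    then obtain \<alpha> where a: "\<alpha> \<in> {2..r+1}" "v = gbar \<alpha>" unfolding S_def by auto
    have "v = (\<Sum>\<beta>=1..r. sc (C \<beta> \<alpha>) (G \<beta>)) + sc (C (r+1) \<alpha>) th"
      using eq a by (auto simp: fun_eq_iff sum_app sc_def)
    also have "\<dots> \<in> F.span T"
    proof (rule F.span_add)
      show "sc (C (r + 1) \<alpha>) th \<in> F.span T"
        by (rule F.span_scale, rule F.span_base) (simp add: T_def)
      show "(\<Sum>\<beta> = 1..r. sc (C \<beta> \<alpha>) (G \<beta>)) \<in> F.span T"
      proof (rule F.span_sum)
        fix \<beta> assume "\<beta> \<in> {1..r}"
        show "sc (C \<beta> \<alpha>) (G \<beta>) \<in> F.span T"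
        proof (cases "\<beta> = r \<or> \<beta> = z")
          case True
          then have "C \<beta> \<alpha> = 0" using Cr Cz a by auto
          then have "sc (C \<beta> \<alpha>) (G \<beta>) = 0" by (simp add: sc_def fun_eq_iff)
          then show ?thesis by (simp only: F.span_zero)
        next
          case False
          with \<open>\<beta> \<in> {1..r}\<close> have "G \<beta> \<in> T" unfolding T_def by auto
          then show ?thesis by (rule F.span_scale[OF F.span_base])
        qed
      qed
    qed
    finally show "v \<in> F.span T" .
  qed
  from F.independent_span_bound[OF finT indS sub] cardS cardT r show False by linarith
qed
theorem lemma2:
  fixes g :: "'v::euclidean_space \<Rightarrow> 'v \<Rightarrow> real"
    and E :: "nat \<Rightarrow> 'v set" and r :: nat and p :: 'v
    and gbar :: "nat \<Rightarrow> 'v \<Rightarrow> 'v \<Rightarrow> real" and C :: "nat \<Rightarrow> nat \<Rightarrow> real"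
  assumes r: "r \<ge> 1"
    and g_sym: "sym_bilinear g"
    and g_lor: "lorentzian_on g UNIV"
    and E_sub: "\<forall>\<beta>\<in>{1..r}. subspace (E \<beta>)"
    and E_ds: "direct_sum E r"
    and E_orth: "\<forall>\<beta>\<in>{1..r}. \<forall>\<gamma>\<in>{1..r}. \<beta> \<noteq> \<gamma> \<longrightarrow> (\<forall>x\<in>E \<beta>. \<forall>y\<in>E \<gamma>. g x y = 0)"
    and E_nondeg: "\<forall>\<beta>\<in>{1..r}. nondeg_on g (E \<beta>)"
    and Er_lor: "lorentzian_on g (E r)"
    and p_in: "p \<in> E r" and p_nz: "p \<noteq> 0" and p_null: "g p p = 0"
    and gbar1: "gbar 1 = g"
    and gbar_sym: "\<forall>\<alpha>\<in>{1..r+1}. sym_bilinear (gbar \<alpha>)"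
    and gbar_indep: "\<forall>c::nat \<Rightarrow> real. (\<forall>X Y. (\<Sum>\<alpha>=1..r+1. c \<alpha> * gbar \<alpha> X Y) = 0)
                        \<longrightarrow> (\<forall>\<alpha>\<in>{1..r+1}. c \<alpha> = 0)"
    and gbar_eq: "\<forall>\<alpha>\<in>{1..r+1}. \<forall>X Y. gbar \<alpha> X Y =
                    (\<Sum>\<beta>=1..r. C \<beta> \<alpha> * g_comp g E r \<beta> X Y) + C (r+1) \<alpha> * (g p X * g p Y)"
    and C_r: "\<forall>\<alpha>\<in>{2..r+1}. C r \<alpha> = 0"
    and C_r1: "\<forall>\<alpha>\<in>{2..r+1}. C (r+1) \<alpha> \<noteq> 0"
  shows "(\<Inter>\<alpha>\<in>{2..r+1}. form_ker (gbar \<alpha>)) = {X \<in> E r. g p X = 0}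
     \<and> g_perp g (\<Inter>\<alpha>\<in>{2..r+1}. form_ker (gbar \<alpha>)) =
        {(\<Sum>\<beta>=1..r-1. x \<beta>) + t *\<^sub>R p | x t. \<forall>\<beta>\<in>{1..r-1}. x \<beta> \<in> E \<beta>}"
proof -
  have gl1: "linear (\<lambda>x. g x y)" for y using g_sym unfolding sym_bilinear_def bilinear_def by blast
  have gl2: "linear (g x)" for x using g_sym unfolding sym_bilinear_def bilinear_def by blast
  have gsym: "g x y = g y x" for x y using g_sym unfolding sym_bilinear_def by blast
  have g0: "g x 0 = 0" for x using linear_0[OF gl2] by simp
  have sub: "subspace (E \<beta>)" if "\<beta> \<in> {1..r}" for \<beta> using E_sub that by blast
  have rin: "r \<in> {1..r}" using r by simp
  have comp_dec: "is_decomp E r v (\<lambda>\<beta>. component E r \<beta> v)" for v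
    unfolding component_def using theI'[OF E_ds[unfolded direct_sum_def, rule_format, of v]] by simp
  have comp_unique: "component E r \<beta> v = x \<beta>" if "is_decomp E r v x" for v x \<beta>
    using E_ds that comp_dec unfolding direct_sum_def by metis
  have comp_in: "component E r \<beta> v \<in> E \<beta>" if "\<beta> \<in> {1..r}" for v \<beta>
    using comp_dec[of v] that unfolding is_decomp_def by blast
  have comp_sum: "v = (\<Sum>\<beta>=1..r. component E r \<beta> v)" for v
    using comp_dec[of v] unfolding is_decomp_def by blast
  have comp_single: "component E r \<beta> Y = (if \<beta> = \<gamma> then Y else 0)"
    if "\<gamma> \<in> {1..r}" "Y \<in> E \<gamma>" for \<gamma> Y \<beta>
  proof (rule comp_unique)
    show "is_decomp E r Y (\<lambda>\<beta>. if \<beta> = \<gamma> then Y else 0)"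
      unfolding is_decomp_def using that by (auto simp: sum.delta intro!: subspace_0 sub)
  qed
  have gbar_single: "gbar \<alpha> X Y = C \<gamma> \<alpha> * g (component E r \<gamma> X) Y + C (r+1) \<alpha> * (g p X * g p Y)"
    if "\<alpha> \<in> {2..r+1}" "\<gamma> \<in> {1..r}" "Y \<in> E \<gamma>" for \<alpha> \<gamma> X Y
  proof -
    have "(\<Sum>\<beta>=1..r. C \<beta> \<alpha> * g_comp g E r \<beta> X Y) = (\<Sum>\<beta>=1..r. if \<beta> = \<gamma> then C \<gamma> \<alpha> * g (component E r \<gamma> X) Y else 0)"
      by (rule sum.cong) (auto simp: g_comp_def comp_single[OF that(2,3)] g0)
    also have "\<dots> = C \<gamma> \<alpha> * g (component E r \<gamma> X) Y" using that(2) by (simp add: sum.delta)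
    finally show ?thesis using gbar_eq that(1) by auto
  qed
  have orth: "g x y = 0" if "\<beta> \<in> {1..r}" "\<gamma> \<in> {1..r}" "\<beta> \<noteq> \<gamma>" "x \<in> E \<beta>" "y \<in> E \<gamma>" for \<beta> \<gamma> x y
    using E_orth that by blast
  obtain y0 where y0: "y0 \<in> E r" "g p y0 \<noteq> 0"
    using E_nondeg rin p_in p_nz unfolding nondeg_on_def by blast
  define Y0 where "Y0 = (1 / g p y0) *\<^sub>R y0"
  have Y0: "Y0 \<in> E r" "g p Y0 = 1"
    unfolding Y0_def using y0 sub[OF rin] linear_scale[OF gl2, of p] by (auto simp: subspace_scale)
  have two: "2 \<in> {2..r+1}" using r by simp
  define W where "W = (\<Inter>\<alpha>\<in>{2..r+1}. form_ker (gbar \<alpha>))"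
  have part1: "W = {X \<in> E r. g p X = 0}"
  proof
    show "W \<subseteq> {X \<in> E r. g p X = 0}"
    proof
      fix X assume XW: "X \<in> W"
      have ker: "gbar \<alpha> X Y = 0" if "\<alpha> \<in> {2..r+1}" for \<alpha> Y
        using XW that unfolding W_def form_ker_def by blast
      have "C (r+1) 2 * (g p X * g p Y0) = 0"
        using ker[OF two, of Y0] gbar_single[OF two rin Y0(1), of X] C_r two by simp
      then have th0: "g p X = 0" using C_r1 two Y0(2) by simp
      have zero: "component E r \<beta> X = 0" if b: "\<beta> \<in> {1..r-1}" for \<beta>
      proof (rule ccontr)
        assume nz: "component E r \<beta> X \<noteq> 0"
        have bin: "\<beta> \<in> {1..r}" using b by auto
        obtain Y where Y: "Y \<in> E \<beta>" "g (component E r \<beta> X) Y \<noteq> 0"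
          using E_nondeg bin comp_in[OF bin, of X] nz unfolding nondeg_on_def by blast
        have Cb: "\<forall>\<alpha>\<in>{2..r+1}. C \<beta> \<alpha> = 0"
        proof
          fix \<alpha> assume a: "\<alpha> \<in> {2..r+1}"
          show "C \<beta> \<alpha> = 0"
            using ker[OF a, of Y] gbar_single[OF a bin Y(1), of X] th0 Y(2) by simp
        qed
        show False
        proof (rule indep_contra[where r=r and gbar=gbar and C=C and G="\<lambda>\<beta>. g_comp g E r \<beta>" and th="\<lambda>X Y. g p X * g p Y" and z=\<beta>])
          show "\<forall>\<alpha>\<in>{2..r+1}. \<forall>X Y. gbar \<alpha> X Y =
                    (\<Sum>\<beta>=1..r. C \<beta> \<alpha> * g_comp g E r \<beta> X Y) + C (r+1) \<alpha> * (g p X * g p Y)"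
            using gbar_eq by auto
        qed (use r gbar_indep C_r b Cb in auto)
      qed
      have "X = (\<Sum>\<beta>=1..r. component E r \<beta> X)" by (rule comp_sum)
      also have "\<dots> = (\<Sum>\<beta>=1..r. if \<beta> = r then component E r r X else 0)"
        by (rule sum.cong) (use zero in auto)
      also have "\<dots> = component E r r X" using rin by (simp add: sum.delta)
      finally have "X \<in> E r" using comp_in[OF rin, of X] by simp
      with th0 show "X \<in> {X \<in> E r. g p X = 0}" by simp
    qed
    show "{X \<in> E r. g p X = 0} \<subseteq> W"
    proof
      fix X assume X: "X \<in> {X \<in> E r. g p X = 0}"
      have "gbar \<alpha> X Y = 0" if a: "\<alpha> \<in> {2..r+1}" for \<alpha> Y
      proof -
        have "gbar \<alpha> X Y = gbar \<alpha> Y X"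
          using gbar_sym a rin unfolding sym_bilinear_def by auto
        also have "\<dots> = C r \<alpha> * g (component E r r Y) X + C (r+1) \<alpha> * (g p Y * g p X)"
          using X gbar_single[OF a rin, of X Y] by simp
        finally show ?thesis using C_r a X by simp
      qed
      then show "X \<in> W" unfolding W_def form_ker_def by blast
    qed
  qed
  have part2: "g_perp g W = {(\<Sum>\<beta>=1..r-1. x \<beta>) + t *\<^sub>R p | x t. \<forall>\<beta>\<in>{1..r-1}. x \<beta> \<in> E \<beta>}"
  proof
    show "g_perp g W \<subseteq> {(\<Sum>\<beta>=1..r-1. x \<beta>) + t *\<^sub>R p | x t. \<forall>\<beta>\<in>{1..r-1}. x \<beta> \<in> E \<beta>}"
    proof
      fix X assume XP: "X \<in> g_perp g W"
      define Xr where "Xr = component E r r X"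
      have Xr: "Xr \<in> E r" unfolding Xr_def using comp_in[OF rin] .
      have rs: "{1..r} = insert r {1..r-1}" "r \<notin> {1..r-1}" using r by auto
      have Xsplit: "X = (\<Sum>\<beta>=1..r-1. component E r \<beta> X) + Xr"
        using comp_sum[of X] rs unfolding Xr_def by (simp add: add.commute)
      have h1: "g Xr Y = 0" if "Y \<in> E r" "g p Y = 0" for Y
      proof -
        have "g X Y = 0" using XP that part1 unfolding g_perp_def by blast
        moreover have "g X Y = (\<Sum>\<beta>=1..r-1. g (component E r \<beta> X) Y) + g Xr Y"
          by (subst Xsplit) (simp add: linear_add[OF gl1] linear_sum[OF gl1])
        moreover have "(\<Sum>\<beta>=1..r-1. g (component E r \<beta> X) Y) = 0"
        proof (rule sum.neutral, rule ballI)
          fix \<beta> assume b: "\<beta> \<in> {1..r-1}"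
          then have bin: "\<beta> \<in> {1..r}" and bn: "\<beta> \<noteq> r" by auto
          show "g (component E r \<beta> X) Y = 0"
            by (rule orth[OF bin rin bn comp_in[OF bin] that(1)])
        qed
        ultimately show ?thesis by simp
      qed
      define t where "t = g Xr Y0"
      have h2: "g (Xr - t *\<^sub>R p) Y = 0" if Y: "Y \<in> E r" for Y
      proof -
        have m: "Y - g p Y *\<^sub>R Y0 \<in> E r" using Y Y0 sub[OF rin] by (simp add: subspace_diff subspace_scale)
        have "g p (Y - g p Y *\<^sub>R Y0) = 0"
          using Y0(2) by (simp add: linear_diff[OF gl2] linear_scale[OF gl2])
        then have "g Xr (Y - g p Y *\<^sub>R Y0) = 0" using h1 m by blast
        then have "g Xr Y = g p Y * t"
          unfolding t_def by (simp add: linear_diff[OF gl2] linear_scale[OF gl2])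
        then show ?thesis by (simp add: linear_diff[OF gl1] linear_scale[OF gl1])
      qed
      have "Xr - t *\<^sub>R p \<in> E r" using Xr p_in sub[OF rin] by (simp add: subspace_diff subspace_scale)
      then have "Xr - t *\<^sub>R p = 0" using h2 E_nondeg rin unfolding nondeg_on_def by blast
      then have "X = (\<Sum>\<beta>=1..r-1. component E r \<beta> X) + t *\<^sub>R p" using Xsplit by simp
      moreover have "\<forall>\<beta>\<in>{1..r-1}. component E r \<beta> X \<in> E \<beta>" using comp_in by auto
      ultimately show "X \<in> {(\<Sum>\<beta>=1..r-1. x \<beta>) + t *\<^sub>R p | x t. \<forall>\<beta>\<in>{1..r-1}. x \<beta> \<in> E \<beta>}"
        by blast
    qed
    show "{(\<Sum>\<beta>=1..r-1. x \<beta>) + t *\<^sub>R p | x t. \<forall>\<beta>\<in>{1..r-1}. x \<beta> \<in> E \<beta>} \<subseteq> g_perp g W"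
    proof
      fix X assume "X \<in> {(\<Sum>\<beta>=1..r-1. x \<beta>) + t *\<^sub>R p | x t. \<forall>\<beta>\<in>{1..r-1}. x \<beta> \<in> E \<beta>}"
      then obtain x t where X: "X = (\<Sum>\<beta>=1..r-1. x \<beta>) + t *\<^sub>R p" "\<forall>\<beta>\<in>{1..r-1}. x \<beta> \<in> E \<beta>"
        by blast
      have "g X Y = 0" if Y: "Y \<in> W" for Y
      proof -
        have Y': "Y \<in> E r" "g p Y = 0" using Y part1 by auto
        have "g X Y = (\<Sum>\<beta>=1..r-1. g (x \<beta>) Y) + t * g p Y"
          unfolding X(1) by (simp add: linear_add[OF gl1] linear_sum[OF gl1] linear_scale[OF gl1])
        moreover have "(\<Sum>\<beta>=1..r-1. g (x \<beta>) Y) = 0"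
        proof (rule sum.neutral, rule ballI)
          fix \<beta> assume b: "\<beta> \<in> {1..r-1}"
          then have bin: "\<beta> \<in> {1..r}" and bn: "\<beta> \<noteq> r" by auto
          show "g (x \<beta>) Y = 0"
            by (rule orth[OF bin rin bn _ Y'(1)]) (use X(2) b in auto)
        qed
        ultimately show ?thesis using Y' by simp
      qed
      then show "X \<in> g_perp g W" unfolding g_perp_def by blast
    qed
  qed
  show ?thesis using part1 part2 unfolding W_def by simp
qed

end
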